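(* Let $S$ be a semiring and let $\mathcal{A}=(A,X,Y,\sigma^A,\delta^A,\omega^A)$ be a Mealy-type weighted automaton over $S$. Then there exists a Moore-type weighted automaton $\mathcal{B}=(B,X,Y,\sigma^B,\delta^B,\omega^B)$ over $S$ such that $[\![\mathcal{A}]\!]_{1n}=[\![\mathcal{B}]\!]_{1n}$ and $[\![\mathcal{A}]\!]_{n1}=[\![\mathcal{B}]\!]_{n1}$. Moreover, $\mathcal{B}$ can be chosen with $|B|\le |A|\cdot(|X|+1)$.
   Context: A semiring $(S,+,\cdot,0,1)$ is a set with $(S,+,0)$ a commutative monoid, $(S,\cdot,1)$ a monoid (not necessarily commutative), $\cdot$ distributing over $+$ on both sides, and $0\cdot s=s\cdot 0=0$. $(X\times Y)^*$ is identified with the set of pairs $(u,v)\in X^*\times Y^*$ with $|u|=|v|$; its empty element is $(\varepsilon,\varepsilon)$. All automata have finite nonempty state set and finite nonempty alphabets $X,Y$. For a map $\delta:Q\times X\times Q\to S$ write $\delta_x(p,q)=\delta(p,x,q)$ (a $Q\times Q$ matrix over $S$), and for a word $w=z_1\cdots z_m\in X^+$ let $\delta_w=\delta_{z_1}\cdot\delta_{z_2}\cdots\delta_{z_m}$ (matrix product, $(\mu_1\cdot\mu_2)(p,q)=\sum_{r\in Q}\mu_1(p,r)\cdot\mu_2(r,q)$). A Mealy-type weighted automaton over $S$ is $\mathcal{A}=(A,X,Y,\sigma,\delta,\omega)$ with $\sigma:A\to S$, $\delta:A\times X\times A\to S$, $\omega:A\times X\times Y\to S$; write $\omega_{x,y}(a)=\omega(a,x,y)$.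 For both behaviors below, the value at $(\varepsilon,\varepsilon)$ is $\sum_{a\in A}\sigma(a)$. For $u=x_1\cdots x_n$, $v=y_1\cdots y_n$ with $n\ge 1$: $[\![\mathcal{A}]\!]_{1n}(u,v)=\sum_{(a_0,\dots,a_{n-1})\in A^{n}}\sigma(a_0)\cdot\omega_{x_1,y_1}(a_0)\cdot\delta_{x_1}(a_0,a_1)\cdot\omega_{x_2,y_2}(a_1)\cdot\delta_{x_2}(a_1,a_2)\cdots\omega_{x_{n-1},y_{n-1}}(a_{n-2})\cdot\delta_{x_{n-1}}(a_{n-2},a_{n-1})\cdot\omega_{x_n,y_n}(a_{n-1})$; $[\![\mathcal{A}]\!]_{n1}(u,v)=\sum_{(a_0,\dots,a_{n-1})\in A^{n}}\sigma(a_0)\cdot\omega_{x_1,y_1}(a_0)\cdot\delta_{x_1}(a_0,a_1)\cdot\omega_{x_2,y_2}(a_1)\cdot\delta_{x_1x_2}(a_0,a_2)\cdot\omega_{x_3,y_3}(a_2)\cdots\delta_{x_1\cdots x_{n-1}}(a_0,a_{n-1})\cdot\omega_{x_n,y_n}(a_{n-1})$. A Moore-type weighted automaton over $S$ is $\mathcal{B}=(B,X,Y,\sigma,\delta,\omega)$ with $\sigma:B\to S$, $\delta:B\times X\times B\to S$, $\omega:B\times Y\to S$; write $\omega_y(b)=\omega(b,y)$. Both behaviors have value $\sum_{b\in B}\sigma(b)$ at $(\varepsilon,\varepsilon)$, and for $u=x_1\cdots x_n$, $v=y_1\cdots y_n$, $n\ge1$: $[\![\mathcal{B}]\!]_{1n}(u,v)=\sum_{(b_0,\dots,b_n)\in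 B^{n+1}}\sigma(b_0)\cdot\delta_{x_1}(b_0,b_1)\cdot\omega_{y_1}(b_1)\cdot\delta_{x_2}(b_1,b_2)\cdot\omega_{y_2}(b_2)\cdots\delta_{x_n}(b_{n-1},b_n)\cdot\omega_{y_n}(b_n)$; $[\![\mathcal{B}]\!]_{n1}(u,v)=\sum_{(b_0,\dots,b_n)\in B^{n+1}}\sigma(b_0)\cdot\delta_{x_1}(b_0,b_1)\cdot\omega_{y_1}(b_1)\cdot\delta_{x_1x_2}(b_0,b_2)\cdot\omega_{y_2}(b_2)\cdots\delta_{x_1\cdots x_n}(b_0,b_n)\cdot\omega_{y_n}(b_n)$. *)

theory Defs
  imports Main
begin

text \<open>Semiring: the class combination {semiring_0, monoid_mult} is exactly a (not
necessarily commutative) semiring with 0 and 1 (no 0 \<noteq> 1 assumption).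
States of an automaton are a finite nonempty set Q; a word x_1...x_n is a list;
transition weights are given as a function d p x q = delta(p,x,q).\<close>

text \<open>delta_w for a word w (matrix product over Q); only used for nonempty w.\<close>
fun dword :: "'q set \<Rightarrow> ('q \<Rightarrow> 'x \<Rightarrow> 'q \<Rightarrow> 's::{semiring_0,monoid_mult}) \<Rightarrow> 'x list \<Rightarrow> 'q \<Rightarrow> 'q \<Rightarrow> 's"
where
  "dword Q d [] p q = (if p = q then 1 else 0)"
| "dword Q d [x] p q = d p x q"
| "dword Q d (x # y # w) p q = (\<Sum>r\<in>Q. d p x r * dword Q d (y # w) r q)"

definition state_seqs :: "'q set \<Rightarrow> nat \<Rightarrow> 'q list set" where
  "state_seqs Q n = {qs. length qs = n \<and> set qs \<subseteq> Q}"

text \<open>Mealy automaton (A, X, Y, sg, d, om): sg :: A -> S, d :: A x X x A -> S,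
 om :: A x X x Y -> S.  Behaviours evaluated at (u,v) with |u| = |v|.\<close>
definition mealy_1n :: "'a set \<Rightarrow> ('a \<Rightarrow> 's::{semiring_0,monoid_mult}) \<Rightarrow> ('a \<Rightarrow> 'x \<Rightarrow> 'a \<Rightarrow> 's)
    \<Rightarrow> ('a \<Rightarrow> 'x \<Rightarrow> 'y \<Rightarrow> 's) \<Rightarrow> 'x list \<Rightarrow> 'y list \<Rightarrow> 's" where
  "mealy_1n A sg d om u v =
    (if u = [] then (\<Sum>a\<in>A. sg a)
     else (\<Sum>as\<in>state_seqs A (length u).
            sg (as ! 0) * prod_list (map (\<lambda>i. om (as ! i) (u ! i) (v ! i) *
                 (if i + 1 < length u then d (as ! i) (u ! i) (as ! (i + 1)) else 1))
               [0..<length u])))"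

definition mealy_n1 :: "'a set \<Rightarrow> ('a \<Rightarrow> 's::{semiring_0,monoid_mult}) \<Rightarrow> ('a \<Rightarrow> 'x \<Rightarrow> 'a \<Rightarrow> 's)
    \<Rightarrow> ('a \<Rightarrow> 'x \<Rightarrow> 'y \<Rightarrow> 's) \<Rightarrow> 'x list \<Rightarrow> 'y list \<Rightarrow> 's" where
  "mealy_n1 A sg d om u v =
    (if u = [] then (\<Sum>a\<in>A. sg a)
     else (\<Sum>as\<in>state_seqs A (length u).
            sg (as ! 0) * prod_list (map (\<lambda>i. om (as ! i) (u ! i) (v ! i) *
                 (if i + 1 < length u then dword A d (take (i + 1) u) (as ! 0) (as ! (i + 1)) else 1))
               [0..<length u])))"

definition moore_1n :: "'b set \<Rightarrow> ('b \<Rightarrow> 's::{semiring_0,monoid_mult}) \<Rightarrow> ('b \<Rightarrow> 'x \<Rightarrow> 'b \<Rightarrow> 's)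
    \<Rightarrow> ('b \<Rightarrow> 'y \<Rightarrow> 's) \<Rightarrow> 'x list \<Rightarrow> 'y list \<Rightarrow> 's" where
  "moore_1n B sg d om u v =
    (if u = [] then (\<Sum>b\<in>B. sg b)
     else (\<Sum>bs\<in>state_seqs B (length u + 1).
            sg (bs ! 0) * prod_list (map (\<lambda>i. d (bs ! i) (u ! i) (bs ! (i + 1)) * om (bs ! (i + 1)) (v ! i))
               [0..<length u])))"

definition moore_n1 :: "'b set \<Rightarrow> ('b \<Rightarrow> 's::{semiring_0,monoid_mult}) \<Rightarrow> ('b \<Rightarrow> 'x \<Rightarrow> 'b \<Rightarrow> 's)
    \<Rightarrow> ('b \<Rightarrow> 'y \<Rightarrow> 's) \<Rightarrow> 'x list \<Rightarrow> 'y list \<Rightarrow> 's" where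
  "moore_n1 B sg d om u v =
    (if u = [] then (\<Sum>b\<in>B. sg b)
     else (\<Sum>bs\<in>state_seqs B (length u + 1).
            sg (bs ! 0) * prod_list (map (\<lambda>i. dword B d (take (i + 1) u) (bs ! 0) (bs ! (i + 1)) * om (bs ! (i + 1)) (v ! i))
               [0..<length u])))"

end

theory Submission
  imports Defs
begin

lemma prod_list_zero_mem: "(0::'s::{semiring_0,monoid_mult}) \<in> set xs \<Longrightarrow> prod_list xs = 0"
  by (induction xs) auto

lemma shift_prod:
  fixes c w :: "nat \<Rightarrow> 's::monoid_mult"
  shows "c 0 * prod_list (map (\<lambda>i. w i * c (Suc i)) [0..<n]) = prod_list (map (\<lambda>i. c i * w i) [0..<n]) * c n"
  by (induction n) (simp_all add: mult.assoc[symmetric])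

lemma finite_state_seqs: "finite Q \<Longrightarrow> finite (state_seqs Q n)"
  unfolding state_seqs_def using finite_lists_length_eq[of Q n] by (simp add: conj_commute)

section \<open>Transfer along an injection\<close>

lemma state_seqs_image:
  assumes "inj_on h B"
  shows "state_seqs (h ` B) m = map h ` state_seqs B m"
proof
  show "map h ` state_seqs B m \<subseteq> state_seqs (h ` B) m"
  proof
    fix cs assume "cs \<in> map h ` state_seqs B m"
    then obtain bs where bs: "bs \<in> state_seqs B m" "cs = map h bs" by blast
    then have "set bs \<subseteq> B" "length bs = m" by (simp_all add: state_seqs_def)
    then show "cs \<in> state_seqs (h ` B) m" using bs(2) by (simp add: state_seqs_def image_mono)
  qed
  show "state_seqs (h ` B) m \<subseteq> map h ` state_seqs B m"
  proof
    fix cs assume cs: "cs \<in> state_seqs (h ` B) m"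
    let ?bs = "map (the_inv_into B h) cs"
    have sc: "set cs \<subseteq> h ` B" "length cs = m" using cs by (simp_all add: state_seqs_def)
    have "h (the_inv_into B h c) = c" if "c \<in> set cs" for c
      using f_the_inv_into_f[OF assms] that sc(1) by blast
    then have "map h ?bs = cs" by (simp add: map_idI)
    moreover have "the_inv_into B h c \<in> B" if "c \<in> set cs" for c
      using the_inv_into_into[OF assms] that sc(1) by blast
    then have "?bs \<in> state_seqs B m" using sc(2) by (auto simp: state_seqs_def)
    ultimately show "cs \<in> map h ` state_seqs B m" by (metis image_eqI)
  qed
qed

lemma inj_map_state_seqs:
  assumes "inj_on h B"
  shows "inj_on (map h) (state_seqs B m)"
proof (rule inj_onI)
  fix xs ys assume a: "xs \<in> state_seqs B m" "ys \<in> state_seqs B m" "map h xs = map h ys"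
  have "set xs \<union> set ys \<subseteq> B" using a(1,2) by (simp add: state_seqs_def)
  then have "inj_on h (set xs \<union> set ys)" by (rule inj_on_subset[OF assms])
  then show "xs = ys" using map_inj_on[OF a(3)] by blast
qed

lemma dword_transfer:
  assumes "inj_on h B" "p \<in> B" "q \<in> B"
  shows "dword (h ` B) (\<lambda>c x c'. d (the_inv_into B h c) x (the_inv_into B h c')) w (h p) (h q) = dword B d w p q"
  using assms(2)
proof (induction w arbitrary: p rule: induct_list012)
  case 1
  then show ?case using assms by (simp add: inj_on_eq_iff)
next
  case (2 x)
  then show ?case using assms by (simp add: the_inv_into_f_f)
next
  case (3 x y w)
  have "dword (h ` B) (\<lambda>c x c'. d (the_inv_into B h c) x (the_inv_into B h c')) (x # y # w) (h p) (h q)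
     = (\<Sum>r\<in>h ` B. d p x (the_inv_into B h r) * dword (h ` B) (\<lambda>c x c'. d (the_inv_into B h c) x (the_inv_into B h c')) (y # w) r (h q))"
    using 3 assms(1) by (simp add: the_inv_into_f_f)
  also have "\<dots> = (\<Sum>r\<in>B. d p x r * dword B d (y # w) r q)"
    using 3 assms(1) by (simp add: sum.reindex the_inv_into_f_f)
  finally show ?case by simp
qed

lemma moore_transfer:
  fixes h :: "'b \<Rightarrow> 'c" and sg :: "'b \<Rightarrow> 's::{semiring_0,monoid_mult}"
  assumes inj: "inj_on h B"
  defines "hi \<equiv> the_inv_into B h"
  shows "moore_1n (h ` B) (\<lambda>c. sg (hi c)) (\<lambda>c x c'. d (hi c) x (hi c')) (\<lambda>c y. om (hi c) y) u v
           = moore_1n B sg d om u v"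
    and "moore_n1 (h ` B) (\<lambda>c. sg (hi c)) (\<lambda>c x c'. d (hi c) x (hi c')) (\<lambda>c y. om (hi c) y) u v
           = moore_n1 B sg d om u v"
proof -
  have hh: "hi (h b) = b" if "b \<in> B" for b
    using that inj by (simp add: hi_def the_inv_into_f_f)
  have el: "bs ! i \<in> B" if "bs \<in> state_seqs B m" "i < m" for bs m i
    using that by (auto simp: state_seqs_def)
  have s0: "(\<Sum>c\<in>h ` B. sg (hi c)) = (\<Sum>b\<in>B. sg b)"
    using inj hh by (simp add: sum.reindex)
  have reix: "(\<Sum>cs\<in>state_seqs (h ` B) m. F cs) = (\<Sum>bs\<in>state_seqs B m. F (map h bs))" for F :: "'c list \<Rightarrow> 's" and m
    unfolding state_seqs_image[OF inj] using inj_map_state_seqs[OF inj]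
    by (simp add: sum.reindex)
  have E: "\<forall>i<m. hi (map h bs ! i) = bs ! i \<and> bs ! i \<in> B \<and> map h bs ! i = h (bs ! i)" if "bs \<in> state_seqs B m" for bs m
  proof (intro allI impI)
    fix i assume "i < m"
    then have "bs ! i \<in> B" "i < length bs" using el[OF that] that by (auto simp: state_seqs_def)
    then show "hi (map h bs ! i) = bs ! i \<and> bs ! i \<in> B \<and> map h bs ! i = h (bs ! i)" using hh by simp
  qed
  show "moore_1n (h ` B) (\<lambda>c. sg (hi c)) (\<lambda>c x c'. d (hi c) x (hi c')) (\<lambda>c y. om (hi c) y) u v
           = moore_1n B sg d om u v"
    unfolding moore_1n_def s0 reix
    apply (rule if_cong[OF refl refl])
    apply (rule sum.cong[OF refl])
    subgoal for bs using E[of bs "length u + 1"]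
      by (intro arg_cong2[where f="(*)"] arg_cong[where f=prod_list] map_cong refl) (auto simp: hh)
    done
  show "moore_n1 (h ` B) (\<lambda>c. sg (hi c)) (\<lambda>c x c'. d (hi c) x (hi c')) (\<lambda>c y. om (hi c) y) u v
           = moore_n1 B sg d om u v"
    unfolding moore_n1_def s0 reix
    apply (rule if_cong[OF refl refl])
    apply (rule sum.cong[OF refl])
    subgoal for bs using E[of bs "length u + 1"]
      by (intro arg_cong2[where f="(*)"] arg_cong[where f=prod_list] map_cong refl)
         (auto simp: hh dword_transfer[OF inj, folded hi_def])
    done
qed


definition B0 :: "'a set \<Rightarrow> 'x set \<Rightarrow> ('a \<times> 'x option) set" where
  "B0 A X = A \<times> insert None (Some ` X)"

definition sg0 :: "('a \<Rightarrow> 's::{semiring_0,monoid_mult}) \<Rightarrow> 'a \<times> 'x option \<Rightarrow> 's" where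
  "sg0 sgA r = (if snd r = None then sgA (fst r) else 0)"

definition d0 :: "('a \<Rightarrow> 'x \<Rightarrow> 'a \<Rightarrow> 's::{semiring_0,monoid_mult}) \<Rightarrow> 'a \<times> 'x option \<Rightarrow> 'x \<Rightarrow> 'a \<times> 'x option \<Rightarrow> 's" where
  "d0 dA r x r' = (if snd r' = Some x then
      (case snd r of None \<Rightarrow> if fst r = fst r' then 1 else 0 | Some z \<Rightarrow> dA (fst r) z (fst r')) else 0)"

definition om0 :: "('a \<Rightarrow> 'x \<Rightarrow> 'y \<Rightarrow> 's::{semiring_0,monoid_mult}) \<Rightarrow> 'a \<times> 'x option \<Rightarrow> 'y \<Rightarrow> 's" where
  "om0 omA r y = (case snd r of None \<Rightarrow> 0 | Some x \<Rightarrow> omA (fst r) x y)"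

lemma finite_B0: "finite A \<Longrightarrow> finite X \<Longrightarrow> finite (B0 A X)"
  by (simp add: B0_def)

lemma sum_B0_some:
  assumes "finite X" "z \<in> X"
  shows "(\<Sum>r\<in>B0 A X. (if snd r = Some z then f (fst r) else (0::'s::comm_monoid_add))) = (\<Sum>a\<in>A. f a)"
proof -
  have "(\<Sum>r\<in>B0 A X. (if snd r = Some z then f (fst r) else 0))
      = (\<Sum>a\<in>A. \<Sum>ov\<in>insert None (Some ` X). (if ov = Some z then f a else 0))"
    unfolding B0_def by (simp add: sum.cartesian_product split_def)
  also have "\<dots> = (\<Sum>a\<in>A. f a)"
    using assms by (simp add: sum.delta')
  finally show ?thesis .
qed

lemma dword_some:
  assumes "finite X"
  shows "set w \<subseteq> X \<Longrightarrow> w \<noteq> [] \<Longrightarrow>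
    dword (B0 A X) (d0 dA) w (a', Some z) (a, ox) = (if ox = Some (last w) then dword A dA (z # butlast w) a' a else 0)"
proof (induction w arbitrary: a' z rule: induct_list012)
  case 1
  then show ?case by simp
next
  case (2 x)
  then show ?case by (simp add: d0_def)
next
  case (3 x y w)
  have "dword (B0 A X) (d0 dA) (x # y # w) (a', Some z) (a, ox)
      = (\<Sum>r\<in>B0 A X. d0 dA (a', Some z) x r * dword (B0 A X) (d0 dA) (y # w) r (a, ox))"
    by simp
  also have "\<dots> = (\<Sum>r\<in>B0 A X. if snd r = Some x then dA a' z (fst r) * dword (B0 A X) (d0 dA) (y # w) (fst r, Some x) (a, ox) else 0)"
    by (rule sum.cong[OF refl]) (auto simp: d0_def)
  also have "\<dots> = (\<Sum>b\<in>A. dA a' z b * dword (B0 A X) (d0 dA) (y # w) (b, Some x) (a, ox))"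
    using 3 assms by (intro sum_B0_some) auto
  also have "\<dots> = (\<Sum>b\<in>A. dA a' z b * (if ox = Some (last (y # w)) then dword A dA (x # butlast (y # w)) b a else 0))"
    using 3 by simp
  also have "\<dots> = (if ox = Some (last (x # y # w)) then dword A dA (z # butlast (x # y # w)) a' a else 0)"
    by simp
  finally show ?case .
qed

lemma dword_none:
  assumes "finite X" "set w \<subseteq> X" "w \<noteq> []" "a0 \<in> A" "finite A"
  shows "dword (B0 A X) (d0 dA) w (a0, None) (a, ox) = (if ox = Some (last w) then dword A dA (butlast w) a0 a else 0)"
proof (cases w)
  case Nil
  then show ?thesis using assms by simp
next
  case (Cons x w')
  show ?thesis
  proof (cases w')
    case Nil
    then show ?thesis using Cons by (simp add: d0_def)
  next
    case (Cons y w'')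
    have "dword (B0 A X) (d0 dA) w (a0, None) (a, ox)
      = (\<Sum>r\<in>B0 A X. d0 dA (a0, None) x r * dword (B0 A X) (d0 dA) (y # w'') r (a, ox))"
      using \<open>w = x # w'\<close> Cons by simp
    also have "\<dots> = (\<Sum>r\<in>B0 A X. if r = (a0, Some x) then dword (B0 A X) (d0 dA) (y # w'') r (a, ox) else 0)"
      by (rule sum.cong[OF refl]) (auto simp: d0_def)
    also have "\<dots> = dword (B0 A X) (d0 dA) (y # w'') (a0, Some x) (a, ox)"
      using assms \<open>w = x # w'\<close> finite_B0[of A X] by (simp add: sum.delta') (simp add: B0_def)
    also have "\<dots> = (if ox = Some (last w) then dword A dA (butlast w) a0 a else 0)"
    proof -
      have e: "dword (B0 A X) (d0 dA) (y # w'') (a0, Some x) (a, ox) = (if ox = Some (last (y # w'')) then dword A dA (x # butlast (y # w'')) a0 a else 0)"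
        by (rule dword_some[OF assms(1)]) (use assms \<open>w = x # w'\<close> Cons in auto)
      have "last w = last (y # w'')" "butlast w = x # butlast (y # w'')"
        using \<open>w = x # w'\<close> Cons by simp_all
      then show ?thesis using e by (simp only:)
    qed
    finally show ?thesis .
  qed
qed


definition enc :: "'x list \<Rightarrow> 'a list \<Rightarrow> ('a \<times> 'x option) list" where
  "enc u as = (as ! 0, None) # map (\<lambda>i. (as ! i, Some (u ! i))) [0..<length u]"

lemma enc_simps:
  "length (enc u as) = Suc (length u)"
  "enc u as ! 0 = (as ! 0, None)"
  "i < length u \<Longrightarrow> enc u as ! Suc i = (as ! i, Some (u ! i))"
  by (simp_all add: enc_def)

lemma enc_in:
  assumes "as \<in> state_seqs A (length u)" "set u \<subseteq> X" "u \<noteq> []"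
  shows "enc u as \<in> state_seqs (B0 A X) (Suc (length u))"
proof -
  have len: "length as = length u" using assms by (simp add: state_seqs_def)
  have "as ! i \<in> A" if "i < length u" for i using assms(1) that len by (auto simp: state_seqs_def)
  moreover have "u ! i \<in> X" if "i < length u" for i using assms(2) that by auto
  ultimately show ?thesis using assms(3)
    by (auto simp: state_seqs_def enc_def B0_def)
qed

lemma enc_inj: "inj_on (enc u) (state_seqs A (length u))"
proof (rule inj_onI)
  fix as as' assume a: "as \<in> state_seqs A (length u)" "as' \<in> state_seqs A (length u)" "enc u as = enc u as'"
  show "as = as'"
  proof (rule nth_equalityI)
    show "length as = length as'" using a by (simp add: state_seqs_def)
    fix i assume "i < length as"
    then have "i < length u" using a by (simp add: state_seqs_def)
    then have "enc u as ! Suc i = enc u as' ! Suc i" using a by simp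
    then show "as ! i = as' ! i" using \<open>i < length u\<close> by (simp add: enc_simps)
  qed
qed

lemma enc_char:
  assumes bs: "bs \<in> state_seqs (B0 A X) (Suc (length u))" and "u \<noteq> []"
    and h0: "snd (bs ! 0) = None" and hs: "\<forall>i<length u. snd (bs ! Suc i) = Some (u ! i)"
    and h1: "fst (bs ! 1) = fst (bs ! 0)"
  shows "bs \<in> enc u ` state_seqs A (length u)"
proof
  let ?as = "map fst (tl bs)"
  have len: "length bs = Suc (length u)" using bs by (simp add: state_seqs_def)
  have sb: "set bs \<subseteq> B0 A X" using bs by (simp add: state_seqs_def)
  show "?as \<in> state_seqs A (length u)"
    using len sb by (auto simp: state_seqs_def B0_def dest!: list.set_sel(2)[rotated])
  show "bs = enc u ?as"
  proof (rule nth_equalityI)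
    show "length bs = length (enc u ?as)" using len by (simp add: enc_simps)
    fix i assume i: "i < length bs"
    show "bs ! i = enc u ?as ! i"
    proof (cases i)
      case 0
      then show ?thesis using h0 h1 len \<open>u \<noteq> []\<close>
        by (simp add: enc_simps nth_tl prod_eq_iff)
    next
      case (Suc j)
      then show ?thesis using hs i len
        by (simp add: enc_simps nth_tl prod_eq_iff)
    qed
  qed
qed

lemma reduce:
  assumes "finite A" "finite X" "set u \<subseteq> X" "u \<noteq> []"
    and nz: "\<And>bs. bs \<in> state_seqs (B0 A X) (Suc (length u)) \<Longrightarrow> F bs \<noteq> (0::'s::comm_monoid_add)
              \<Longrightarrow> bs \<in> enc u ` state_seqs A (length u)"
  shows "(\<Sum>bs\<in>state_seqs (B0 A X) (Suc (length u)). F bs) = (\<Sum>as\<in>state_seqs A (length u). F (enc u as))"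
proof -
  have sub: "enc u ` state_seqs A (length u) \<subseteq> state_seqs (B0 A X) (Suc (length u))"
    using enc_in assms by blast
  have "(\<Sum>bs\<in>state_seqs (B0 A X) (Suc (length u)). F bs) = (\<Sum>bs\<in>enc u ` state_seqs A (length u). F bs)"
    by (rule sum.mono_neutral_right[OF finite_state_seqs[OF finite_B0[OF assms(1,2)]] sub]) (use nz in blast)
  also have "\<dots> = (\<Sum>as\<in>state_seqs A (length u). F (enc u as))"
    by (simp add: sum.reindex[OF enc_inj])
  finally show ?thesis .
qed

lemma prod_nz: "prod_list (map f [0..<n]) \<noteq> (0::'s::{semiring_0,monoid_mult}) \<Longrightarrow> i < n \<Longrightarrow> f i \<noteq> 0"
  using prod_list_zero_mem[of "map f [0..<n]"] by force

lemma sum_sg0: "finite X \<Longrightarrow> (\<Sum>b\<in>B0 A X. sg0 sgA b) = (\<Sum>a\<in>A. sgA a)"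
proof -
  assume "finite X"
  have "(\<Sum>b\<in>B0 A X. sg0 sgA b) = (\<Sum>a\<in>A. \<Sum>ov\<in>insert None (Some ` X). if ov = None then sgA a else 0)"
    unfolding B0_def sg0_def by (simp add: sum.cartesian_product split_def)
  also have "\<dots> = (\<Sum>a\<in>A. sgA a)"
    using \<open>finite X\<close> by (simp add: sum.delta sum.delta')
  finally show ?thesis .
qed


lemma main_1n:
  fixes sgA :: "'a \<Rightarrow> 's::{semiring_0,monoid_mult}"
  assumes fin: "finite A" "finite X" and uX: "set u \<subseteq> X"
  shows "moore_1n (B0 A X) (sg0 sgA) (d0 dA) (om0 omA) u v = mealy_1n A sgA dA omA u v"
proof (cases "u = []")
  case True
  then show ?thesis using fin by (simp add: moore_1n_def mealy_1n_def sum_sg0)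
next
  case False
  let ?n = "length u"
  define F where "F bs = sg0 sgA (bs ! 0) * prod_list (map (\<lambda>i. d0 dA (bs ! i) (u ! i) (bs ! (i + 1)) * om0 omA (bs ! (i + 1)) (v ! i)) [0..<?n])" for bs
  have "(\<Sum>bs\<in>state_seqs (B0 A X) (Suc ?n). F bs) = (\<Sum>as\<in>state_seqs A ?n. F (enc u as))"
  proof (rule reduce[OF fin uX False])
    fix bs assume bs: "bs \<in> state_seqs (B0 A X) (Suc ?n)" and nz: "F bs \<noteq> 0"
    have h0: "snd (bs ! 0) = None" using nz by (auto simp: F_def sg0_def split: if_splits)
    have pnz: "prod_list (map (\<lambda>i. d0 dA (bs ! i) (u ! i) (bs ! (i + 1)) * om0 omA (bs ! (i + 1)) (v ! i)) [0..<?n]) \<noteq> 0"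
      using nz by (auto simp: F_def)
    have dnz: "d0 dA (bs ! i) (u ! i) (bs ! Suc i) \<noteq> 0" if "i < ?n" for i
      using prod_nz[OF pnz that] by auto
    show "bs \<in> enc u ` state_seqs A ?n"
    proof (rule enc_char[OF bs False h0])
      show "\<forall>i<?n. snd (bs ! Suc i) = Some (u ! i)"
      proof (intro allI impI)
        fix i assume "i < ?n"
        from dnz[OF this] show "snd (bs ! Suc i) = Some (u ! i)"
          by (auto simp: d0_def split: if_splits)
      qed
      show "fst (bs ! 1) = fst (bs ! 0)"
        using dnz[of 0] False h0 by (auto simp: d0_def split: if_splits)
    qed
  qed
  also have "\<dots> = (\<Sum>as\<in>state_seqs A ?n. sgA (as ! 0) * prod_list (map (\<lambda>i. omA (as ! i) (u ! i) (v ! i) *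
                 (if i + 1 < ?n then dA (as ! i) (u ! i) (as ! (i + 1)) else 1)) [0..<?n]))"
  proof (rule sum.cong[OF refl])
    fix as assume as: "as \<in> state_seqs A ?n"
    define c where "c i = (if i = 0 \<or> ?n \<le> i then 1 else dA (as ! (i - 1)) (u ! (i - 1)) (as ! i))" for i
    define w where "w i = omA (as ! i) (u ! i) (v ! i)" for i
    have m1: "map (\<lambda>i. d0 dA (enc u as ! i) (u ! i) (enc u as ! (i + 1)) * om0 omA (enc u as ! (i + 1)) (v ! i)) [0..<?n]
        = map (\<lambda>i. c i * w i) [0..<?n]"
    proof (rule map_cong[OF refl])
      fix i assume "i \<in> set [0..<?n]"
      then have i: "i < ?n" by simp
      show "d0 dA (enc u as ! i) (u ! i) (enc u as ! (i + 1)) * om0 omA (enc u as ! (i + 1)) (v ! i) = c i * w i"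
      proof (cases i)
        case 0
        then show ?thesis using i by (simp add: enc_simps d0_def om0_def c_def w_def)
      next
        case (Suc j)
        then show ?thesis using i by (simp add: enc_simps d0_def om0_def c_def w_def)
      qed
    qed
    have m2: "map (\<lambda>i. omA (as ! i) (u ! i) (v ! i) * (if i + 1 < ?n then dA (as ! i) (u ! i) (as ! (i + 1)) else 1)) [0..<?n]
        = map (\<lambda>i. w i * c (Suc i)) [0..<?n]"
      by (rule map_cong[OF refl]) (auto simp: c_def w_def)
    have c0: "c 0 = 1" "c ?n = 1" by (simp_all add: c_def)
    have "prod_list (map (\<lambda>i. c i * w i) [0..<?n]) = prod_list (map (\<lambda>i. w i * c (Suc i)) [0..<?n])"
      using shift_prod[of c w ?n] c0 by simp
    then show "F (enc u as) = sgA (as ! 0) * prod_list (map (\<lambda>i. omA (as ! i) (u ! i) (v ! i) *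
                 (if i + 1 < ?n then dA (as ! i) (u ! i) (as ! (i + 1)) else 1)) [0..<?n])"
      unfolding F_def m1 m2 by (simp add: enc_simps sg0_def)
  qed
  finally show ?thesis using False by (simp add: moore_1n_def mealy_1n_def F_def)
qed


lemma take_facts:
  assumes "i < length u"
  shows "take (Suc i) u \<noteq> []" "last (take (Suc i) u) = u ! i" "butlast (take (Suc i) u) = take i u"
  using assms by (simp_all add: take_Suc_conv_app_nth)

lemma dword_none':
  assumes "finite A" "finite X" "set u \<subseteq> X" "i < length u" "a0 \<in> A"
  shows "dword (B0 A X) (d0 dA) (take (Suc i) u) (a0, None) r
    = (if snd r = Some (u ! i) then dword A dA (take i u) a0 (fst r) else 0)"
proof -
  have "set (take (Suc i) u) \<subseteq> X" using assms(3) by (meson order_trans set_take_subset)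
  from dword_none[OF assms(2) this take_facts(1)[OF assms(4)] assms(5) assms(1), of dA "fst r" "snd r"]
  show ?thesis using take_facts[OF assms(4)] by simp
qed

lemma main_n1:
  fixes sgA :: "'a \<Rightarrow> 's::{semiring_0,monoid_mult}"
  assumes fin: "finite A" "finite X" and uX: "set u \<subseteq> X"
  shows "moore_n1 (B0 A X) (sg0 sgA) (d0 dA) (om0 omA) u v = mealy_n1 A sgA dA omA u v"
proof (cases "u = []")
  case True
  then show ?thesis using fin by (simp add: moore_n1_def mealy_n1_def sum_sg0)
next
  case False
  let ?n = "length u"
  define F where "F bs = sg0 sgA (bs ! 0) * prod_list (map (\<lambda>i. dword (B0 A X) (d0 dA) (take (i + 1) u) (bs ! 0) (bs ! (i + 1)) * om0 omA (bs ! (i + 1)) (v ! i)) [0..<?n])" for bs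
  have "(\<Sum>bs\<in>state_seqs (B0 A X) (Suc ?n). F bs) = (\<Sum>as\<in>state_seqs A ?n. F (enc u as))"
  proof (rule reduce[OF fin uX False])
    fix bs assume bs: "bs \<in> state_seqs (B0 A X) (Suc ?n)" and nz: "F bs \<noteq> 0"
    have h0: "snd (bs ! 0) = None" using nz by (auto simp: F_def sg0_def split: if_splits)
    have "bs ! 0 \<in> B0 A X" using bs by (auto simp: state_seqs_def)
    then have a0: "fst (bs ! 0) \<in> A" by (auto simp: B0_def)
    have b0: "bs ! 0 = (fst (bs ! 0), None)" using h0 by (simp add: prod_eq_iff)
    have pnz: "prod_list (map (\<lambda>i. dword (B0 A X) (d0 dA) (take (i + 1) u) (bs ! 0) (bs ! (i + 1)) * om0 omA (bs ! (i + 1)) (v ! i)) [0..<?n]) \<noteq> 0"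
      using nz by (auto simp: F_def)
    have dnz: "(if snd (bs ! Suc i) = Some (u ! i) then dword A dA (take i u) (fst (bs ! 0)) (fst (bs ! Suc i)) else 0) \<noteq> 0" if "i < ?n" for i
    proof -
      have "dword (B0 A X) (d0 dA) (take (Suc i) u) (bs ! 0) (bs ! Suc i) \<noteq> 0"
        using prod_nz[OF pnz that] by auto
      then show ?thesis using dword_none'[OF fin uX that a0, of dA "bs ! Suc i"] b0 by simp
    qed
    show "bs \<in> enc u ` state_seqs A ?n"
    proof (rule enc_char[OF bs False h0])
      show "\<forall>i<?n. snd (bs ! Suc i) = Some (u ! i)"
      proof (intro allI impI)
        fix i assume "i < ?n"
        from dnz[OF this] show "snd (bs ! Suc i) = Some (u ! i)"
          by (auto split: if_splits)
      qed
      show "fst (bs ! 1) = fst (bs ! 0)"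
        using dnz[of 0] False by (auto split: if_splits)
    qed
  qed
  also have "\<dots> = (\<Sum>as\<in>state_seqs A ?n. sgA (as ! 0) * prod_list (map (\<lambda>i. omA (as ! i) (u ! i) (v ! i) *
                 (if i + 1 < ?n then dword A dA (take (i + 1) u) (as ! 0) (as ! (i + 1)) else 1)) [0..<?n]))"
  proof (rule sum.cong[OF refl])
    fix as assume as: "as \<in> state_seqs A ?n"
    have a0: "as ! 0 \<in> A" using as False by (auto simp: state_seqs_def)
    define c where "c i = (if i < ?n then dword A dA (take i u) (as ! 0) (as ! i) else 1)" for i
    define w where "w i = omA (as ! i) (u ! i) (v ! i)" for i
    have m1: "map (\<lambda>i. dword (B0 A X) (d0 dA) (take (i + 1) u) (enc u as ! 0) (enc u as ! (i + 1)) * om0 omA (enc u as ! (i + 1)) (v ! i)) [0..<?n]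
        = map (\<lambda>i. c i * w i) [0..<?n]"
    proof (rule map_cong[OF refl])
      fix i assume "i \<in> set [0..<?n]"
      then have i: "i < ?n" by simp
      show "dword (B0 A X) (d0 dA) (take (i + 1) u) (enc u as ! 0) (enc u as ! (i + 1)) * om0 omA (enc u as ! (i + 1)) (v ! i) = c i * w i"
        using i dword_none'[OF fin uX i a0, of dA "(as ! i, Some (u ! i))"]
        by (simp add: enc_simps om0_def c_def w_def)
    qed
    have m2: "map (\<lambda>i. omA (as ! i) (u ! i) (v ! i) * (if i + 1 < ?n then dword A dA (take (i + 1) u) (as ! 0) (as ! (i + 1)) else 1)) [0..<?n]
        = map (\<lambda>i. w i * c (Suc i)) [0..<?n]"
      by (rule map_cong[OF refl]) (auto simp: c_def w_def)
    have c0: "c 0 = 1" "c ?n = 1" using False by (simp_all add: c_def)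
    have "prod_list (map (\<lambda>i. c i * w i) [0..<?n]) = prod_list (map (\<lambda>i. w i * c (Suc i)) [0..<?n])"
      using shift_prod[of c w ?n] c0 by simp
    then show "F (enc u as) = sgA (as ! 0) * prod_list (map (\<lambda>i. omA (as ! i) (u ! i) (v ! i) *
                 (if i + 1 < ?n then dword A dA (take (i + 1) u) (as ! 0) (as ! (i + 1)) else 1)) [0..<?n])"
      unfolding F_def m1 m2 by (simp add: enc_simps sg0_def)
  qed
  finally show ?thesis using False by (simp add: moore_n1_def mealy_n1_def F_def)
qed


theorem theorem4:
  fixes A :: "'a set" and X :: "'x set" and Y :: "'y set"
    and sgA :: "'a \<Rightarrow> 's::{semiring_0,monoid_mult}"
    and dA :: "'a \<Rightarrow> 'x \<Rightarrow> 'a \<Rightarrow> 's"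
    and omA :: "'a \<Rightarrow> 'x \<Rightarrow> 'y \<Rightarrow> 's"
  assumes "finite A" "A \<noteq> {}" "finite X" "X \<noteq> {}" "finite Y" "Y \<noteq> {}"
  shows "\<exists>(B :: nat set) (sgB :: nat \<Rightarrow> 's) (dB :: nat \<Rightarrow> 'x \<Rightarrow> nat \<Rightarrow> 's) (omB :: nat \<Rightarrow> 'y \<Rightarrow> 's).
           finite B \<and> B \<noteq> {} \<and> card B \<le> card A * (card X + 1) \<and>
           (\<forall>u v. u \<in> lists X \<longrightarrow> v \<in> lists Y \<longrightarrow> length u = length v \<longrightarrow>
              mealy_1n A sgA dA omA u v = moore_1n B sgB dB omB u v \<and>
              mealy_n1 A sgA dA omA u v = moore_n1 B sgB dB omB u v)"
proof -
  obtain h :: "'a \<times> 'x option \<Rightarrow> nat" and m where hm: "h ` B0 A X = {i. i < m}" "inj_on h (B0 A X)"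
    using finite_imp_inj_to_nat_seg[OF finite_B0[OF assms(1,3)]] by blast
  define hi where "hi = the_inv_into (B0 A X) h"
  let ?B = "h ` B0 A X"
  let ?sg = "\<lambda>c. sg0 sgA (hi c)"
  let ?d = "\<lambda>c x c'. d0 dA (hi c) x (hi c')"
  let ?om = "\<lambda>c y. om0 omA (hi c) y"
  have fB: "finite ?B" using finite_B0[OF assms(1,3)] by simp
  have neB: "?B \<noteq> {}" using assms(2) by (simp add: B0_def)
  have cardB: "card ?B = card A * (card X + 1)"
  proof -
    have "card ?B = card (B0 A X)" using hm(2) by (simp add: card_image)
    also have "\<dots> = card A * card (insert None (Some ` X))" by (simp add: B0_def card_cartesian_product)
    also have "card (insert None (Some ` X)) = card X + 1"
      using assms(3) by (simp add: card_image)
    finally show ?thesis .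
  qed
  have eq: "mealy_1n A sgA dA omA u v = moore_1n ?B ?sg ?d ?om u v \<and>
            mealy_n1 A sgA dA omA u v = moore_n1 ?B ?sg ?d ?om u v" if "u \<in> lists X" for u v
  proof -
    have uX: "set u \<subseteq> X" using that by auto
    show ?thesis
      using moore_transfer[OF hm(2), of "sg0 sgA" "d0 dA" "om0 omA" u v, folded hi_def]
        main_1n[OF assms(1,3) uX, of sgA dA omA v] main_n1[OF assms(1,3) uX, of sgA dA omA v]
      by simp
  qed
  show ?thesis
    by (rule exI[of _ ?B], rule exI[of _ ?sg], rule exI[of _ ?d], rule exI[of _ ?om])
       (use fB neB cardB eq in auto)
qed

end
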